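(* Let $p$ be a prime, $G$ and $H$ finite $p$-groups, and for $\Gamma\in\{G,H\}$ let $N_\Gamma$ be a subgroup of $\Gamma$ containing $\Gamma'$. Let $k$ be a field of characteristic $p$ and $\phi:kG\to kH$ a ring isomorphism with $\phi(I(N_G)kG)=I(N_H)kH$. Then for every positive integer $t$, $\phi\big(I(\Omega_t(G:N_G))kG\big)=I(\Omega_t(H:N_H))kH$.
   Context: For a subgroup $N$ of $\Gamma$, $I(N)$ is the augmentation ideal of $kN$ and $I(N)k\Gamma$ the relative augmentation ideal. For a normal subgroup $N$ of $\Gamma$, $\Omega_t(\Gamma:N)=\langle g\in\Gamma: g^{p^t}\in N\rangle$, i.e.\ the subgroup containing $N$ with $\Omega_t(\Gamma:N)/N=\Omega_t(\Gamma/N)$. *)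

theory Defs
  imports "HOL-Algebra.Algebra"
begin

definition galg_carrier :: "('g, 'b) monoid_scheme \<Rightarrow> ('g \<Rightarrow> 'k::field) set" where
  "galg_carrier G = {f. \<forall>x. x \<notin> carrier G \<longrightarrow> f x = 0}"

definition galg_mult :: "('g, 'b) monoid_scheme \<Rightarrow> ('g \<Rightarrow> 'k::field) \<Rightarrow> ('g \<Rightarrow> 'k) \<Rightarrow> ('g \<Rightarrow> 'k)" where
  "galg_mult G f h = (\<lambda>x. if x \<in> carrier G
      then (\<Sum>y\<in>carrier G. f y * h (inv\<^bsub>G\<^esub> y \<otimes>\<^bsub>G\<^esub> x)) else 0)"

definition group_alg :: "('g, 'b) monoid_scheme \<Rightarrow> ('g \<Rightarrow> 'k::field) ring" where
  "group_alg G = \<lparr> carrier = galg_carrier G,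
                   monoid.mult = galg_mult G,
                   one = (\<lambda>x. if x = \<one>\<^bsub>G\<^esub> then 1 else 0),
                   ring.zero = (\<lambda>x. 0),
                   ring.add = (\<lambda>f h x. f x + h x) \<rparr>"

definition aug_ideal :: "('g, 'b) monoid_scheme \<Rightarrow> 'g set \<Rightarrow> ('g \<Rightarrow> 'k::field) set" where
  "aug_ideal G N = {f. (\<forall>x. x \<notin> N \<longrightarrow> f x = 0) \<and> (\<Sum>x\<in>N. f x) = 0}"

definition rel_aug_ideal :: "('g, 'b) monoid_scheme \<Rightarrow> 'g set \<Rightarrow> ('g \<Rightarrow> 'k::field) set" where
  "rel_aug_ideal G N = {s. \<exists>(n::nat) a b.
      (\<forall>i<n. a i \<in> aug_ideal G N \<and> b i \<in> galg_carrier G) \<and>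
      s = (\<lambda>x. \<Sum>i<n. galg_mult G (a i) (b i) x)}"

definition Omega_rel :: "('g, 'b) monoid_scheme \<Rightarrow> nat \<Rightarrow> nat \<Rightarrow> 'g set \<Rightarrow> 'g set" where
  "Omega_rel G p t N = generate G {g \<in> carrier G. g [^]\<^bsub>G\<^esub> (p ^ t) \<in> N}"

definition p_group :: "nat \<Rightarrow> ('g, 'b) monoid_scheme \<Rightarrow> bool" where
  "p_group p G \<longleftrightarrow> group G \<and> finite (carrier G) \<and> (\<exists>n. card (carrier G) = p ^ n)"

end

theory Submission
  imports Defs "HOL-Computational_Algebra.Primes"
begin


lemma galg_mult_closed: "galg_mult G f h \<in> galg_carrier G"
  by (simp add: galg_mult_def galg_carrier_def)

lemma group_alg_simps:
  "carrier (group_alg G) = galg_carrier G"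
  "monoid.mult (group_alg G) = galg_mult G"
  "one (group_alg G) = (\<lambda>x. if x = \<one>\<^bsub>G\<^esub> then 1 else 0)"
  "ring.zero (group_alg G) = (\<lambda>x. 0)"
  "ring.add (group_alg G) = (\<lambda>f h x. f x + h x)"
  by (simp_all add: group_alg_def)

lemma (in group) sum_reindex_left:
  assumes "z \<in> carrier G"
  shows "(\<Sum>y\<in>carrier G. F y) = (\<Sum>w\<in>carrier G. F (z \<otimes> w))"
  by (rule sum.reindex_bij_witness[of _ "\<lambda>w. z \<otimes> w" "\<lambda>y. inv z \<otimes> y"])
     (auto simp: assms m_assoc[symmetric])

lemma galg_mult_assoc:
  fixes G (structure)
  assumes G: "group G" and f: "f \<in> galg_carrier G" and g: "g \<in> galg_carrier G"
    and h: "h \<in> galg_carrier G"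
  shows "galg_mult G (galg_mult G f g) h = galg_mult G f (galg_mult G g h)"
proof
  interpret group G by fact
  fix x
  show "galg_mult G (galg_mult G f g) h x = galg_mult G f (galg_mult G g h) x"
  proof (cases "x \<in> carrier G")
    case False then show ?thesis by (simp add: galg_mult_def)
  next
    case x: True
    have inner: "(\<Sum>y\<in>carrier G. g (inv z \<otimes> y) * h (inv y \<otimes> x))
        = (\<Sum>w\<in>carrier G. g w * h (inv w \<otimes> (inv z \<otimes> x)))" if z: "z \<in> carrier G" for z
      by (subst sum_reindex_left[OF z]) (simp add: z x m_assoc[symmetric] inv_mult_group)
    have "galg_mult G (galg_mult G f g) h x
        = (\<Sum>y\<in>carrier G. (\<Sum>z\<in>carrier G. f z * g (inv z \<otimes> y)) * h (inv y \<otimes> x))"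
      using x by (simp add: galg_mult_def)
    also have "\<dots> = (\<Sum>z\<in>carrier G. f z * (\<Sum>y\<in>carrier G. g (inv z \<otimes> y) * h (inv y \<otimes> x)))"
      by (simp add: sum_distrib_left sum_distrib_right mult.assoc) (rule sum.swap)
    also have "\<dots> = (\<Sum>z\<in>carrier G. f z * (\<Sum>w\<in>carrier G. g w * h (inv w \<otimes> (inv z \<otimes> x))))"
      by (rule sum.cong) (simp_all add: inner)
    also have "\<dots> = galg_mult G f (galg_mult G g h) x"
      using x by (simp add: galg_mult_def)
    finally show ?thesis .
  qed
qed

lemma galg_mult_comm:
  fixes G (structure)
  assumes G: "comm_group G"
  shows "galg_mult G f g = galg_mult G g f"
proof
  interpret comm_group G by fact
  fix x
  show "galg_mult G f g x = galg_mult G g f x"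
  proof (cases "x \<in> carrier G")
    case False then show ?thesis by (simp add: galg_mult_def)
  next
    case x: True
    have c2: "\<And>a. a \<in> carrier G \<Longrightarrow> x \<otimes> (inv x \<otimes> a) = a"
      using x by (simp add: m_assoc[symmetric])
    have c: "\<And>a. a \<in> carrier G \<Longrightarrow> x \<otimes> (a \<otimes> inv x) = a"
      using x c2 by (simp add: m_comm[of _ "inv x"])
    have c3: "\<And>a. a \<in> carrier G \<Longrightarrow> inv x \<otimes> (a \<otimes> x) = a"
      using x by (simp add: m_comm[of _ x] m_assoc[symmetric])
    have "(\<Sum>y\<in>carrier G. f y * g (inv y \<otimes> x)) = (\<Sum>w\<in>carrier G. g w * f (inv w \<otimes> x))"
      by (rule sum.reindex_bij_witness[of _ "\<lambda>w. x \<otimes> inv w" "\<lambda>y. inv y \<otimes> x"])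
         (auto simp: x m_assoc inv_mult_group mult.commute c c2 c3)
    then show ?thesis using x by (simp add: galg_mult_def)
  qed
qed

lemma galg_one_mult:
  fixes G (structure)
  assumes G: "group G" and fin: "finite (carrier G)" and f: "f \<in> galg_carrier G"
  shows "galg_mult G (\<lambda>x. if x = \<one>\<^bsub>G\<^esub> then 1 else 0) f = f"
proof
  interpret group G by fact
  fix x show "galg_mult G (\<lambda>x. if x = \<one> then 1 else 0) f x = f x"
  proof (cases "x \<in> carrier G")
    case True
    have "(\<Sum>y\<in>carrier G. (if y = \<one> then 1 else 0) * f (inv y \<otimes> x))
        = (\<Sum>y\<in>carrier G. (if y = \<one> then f (inv y \<otimes> x) else 0))"
      by (rule sum.cong) auto
    also have "\<dots> = f x" using fin True by (simp add: sum.delta)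
    finally show ?thesis using True by (simp add: galg_mult_def)
  qed (use f in \<open>auto simp: galg_mult_def galg_carrier_def\<close>)
qed

lemma galg_one_closed:
  assumes "group G"
  shows "(\<lambda>x. if x = \<one>\<^bsub>G\<^esub> then (1::'k::field) else 0) \<in> galg_carrier G"
  using group.is_monoid[OF assms] by (auto simp: galg_carrier_def monoid.one_closed)

lemma comm_monoid_group_alg:
  assumes "comm_group G" "finite (carrier G)"
  shows "comm_monoid (group_alg G :: ('g \<Rightarrow> 'k::field) ring)"
proof -
  interpret comm_group G by fact
  show ?thesis
    by (rule comm_monoidI)
       (auto simp: group_alg_simps galg_mult_closed
         intro: galg_mult_assoc galg_one_mult galg_mult_comm is_group assms galg_one_closed)
qed



lemma gm_sum_left:
  "galg_mult G (\<lambda>x. \<Sum>i\<in>S. F i x) H = (\<lambda>x. \<Sum>i\<in>S. galg_mult G (F i) H x)"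
  by (rule ext) (auto simp: galg_mult_def sum_distrib_right intro: sum.swap)

lemma gm_scal_left:
  "galg_mult G (\<lambda>x. c * F x) H = (\<lambda>x. c * galg_mult G F H x)"
  by (rule ext) (auto simp: galg_mult_def sum_distrib_left mult.assoc)

lemma gm_add_right:
  "galg_mult G F (\<lambda>x. P x + W x) = (\<lambda>x. galg_mult G F P x + galg_mult G F W x)"
  by (rule ext) (auto simp: galg_mult_def distrib_left sum.distrib)

lemma pascal_sum:
  fixes A :: "nat \<Rightarrow> nat \<Rightarrow> 'k::field"
  shows "(\<Sum>k\<le>n. of_nat (n choose k) * (A (Suc k) (n-k) + A k (Suc n - k)))
       = (\<Sum>k\<le>Suc n. of_nat (Suc n choose k) * A k (Suc n - k))"
proof -
  have e1: "(\<Sum>k\<le>n. of_nat (n choose k) * A k (Suc n - k))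
      = A 0 (Suc n) + (\<Sum>k\<le>n. of_nat (n choose Suc k) * A (Suc k) (n - k))"
  proof -
    have "(\<Sum>k\<le>n. of_nat (n choose k) * A k (Suc n - k))
        = A 0 (Suc n) + (\<Sum>k<n. of_nat (n choose Suc k) * A (Suc k) (Suc n - Suc k))"
    proof (cases n)
      case 0 then show ?thesis by simp
    next
      case (Suc m)
      then show ?thesis
        by (simp only: sum.atMost_Suc_shift lessThan_Suc_atMost) simp
    qed
    also have "\<dots> = A 0 (Suc n) + (\<Sum>k\<le>n. of_nat (n choose Suc k) * A (Suc k) (n - k))"
      by (simp add: lessThan_Suc_atMost[symmetric] binomial_eq_0)
    finally show ?thesis .
  qed
  have "(\<Sum>k\<le>Suc n. of_nat (Suc n choose k) * A k (Suc n - k))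
      = A 0 (Suc n) + (\<Sum>k\<le>n. of_nat (Suc n choose Suc k) * A (Suc k) (n - k))"
    by (simp only: sum.atMost_Suc_shift) simp
  also have "\<dots> = A 0 (Suc n) + (\<Sum>k\<le>n. of_nat (n choose k) * A (Suc k) (n - k))
       + (\<Sum>k\<le>n. of_nat (n choose Suc k) * A (Suc k) (n - k))"
    by (simp add: distrib_right sum.distrib)
  finally show ?thesis
    using e1 by (simp add: distrib_left sum.distrib)
qed

context
  fixes Q :: "('q, 'b) monoid_scheme" (structure)
  assumes cg: "comm_group Q" and fin: "finite (carrier Q)"
begin

abbreviation RQ :: "('q \<Rightarrow> 'k::field) ring" where "RQ \<equiv> group_alg Q"

lemma RQ_cm: "comm_monoid (RQ :: ('q \<Rightarrow> 'k::field) ring)"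
  by (rule comm_monoid_group_alg[OF cg fin])

lemma binom_RQ:
  fixes U V :: "'q \<Rightarrow> 'k::field"
  assumes U: "U \<in> galg_carrier Q" and V: "V \<in> galg_carrier Q"
  shows "(\<lambda>x. U x + V x) [^]\<^bsub>RQ\<^esub> n
     = (\<lambda>x. \<Sum>k\<le>n. of_nat (n choose k) * galg_mult Q (U [^]\<^bsub>RQ\<^esub> k) (V [^]\<^bsub>RQ\<^esub> (n-k)) x)"
proof (induction n)
  case 0
  have g: "group Q" using cg comm_group.axioms(2) group.intro
    by (metis comm_group_def)
  show ?case by (simp add: group_alg_simps galg_one_mult[OF g fin galg_one_closed[OF g]])
next
  case (Suc n)
  interpret M: comm_monoid "RQ :: ('q \<Rightarrow> 'k) ring" by (rule RQ_cm)
  have XC: "U \<in> carrier RQ" "V \<in> carrier RQ" using U V by (simp_all add: group_alg_simps)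
  have t1: "galg_mult Q (galg_mult Q (U [^]\<^bsub>RQ\<^esub> k) (V [^]\<^bsub>RQ\<^esub> (n-k))) U
      = galg_mult Q (U [^]\<^bsub>RQ\<^esub> Suc k) (V [^]\<^bsub>RQ\<^esub> (n-k))" for k
    using M.m_assoc M.m_comm XC by (simp add: group_alg_simps[symmetric])
  have t2: "galg_mult Q (galg_mult Q (U [^]\<^bsub>RQ\<^esub> k) (V [^]\<^bsub>RQ\<^esub> (n-k))) V
      = galg_mult Q (U [^]\<^bsub>RQ\<^esub> k) (V [^]\<^bsub>RQ\<^esub> (Suc n - k))" if "k \<le> n" for k
  proof -
    have "Suc n - k = Suc (n - k)" using that by simp
    then show ?thesis
      using M.m_assoc XC by (simp add: group_alg_simps[symmetric])
  qed
  have "(\<lambda>x. U x + V x) [^]\<^bsub>RQ\<^esub> Suc n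
      = galg_mult Q (\<lambda>x. \<Sum>k\<le>n. of_nat (n choose k) * galg_mult Q (U [^]\<^bsub>RQ\<^esub> k) (V [^]\<^bsub>RQ\<^esub> (n-k)) x)
          (\<lambda>x. U x + V x)"
    by (simp add: Suc.IH group_alg_simps)
  also have "\<dots> = (\<lambda>x. \<Sum>k\<le>n. of_nat (n choose k) *
        (galg_mult Q (galg_mult Q (U [^]\<^bsub>RQ\<^esub> k) (V [^]\<^bsub>RQ\<^esub> (n-k))) U x
       + galg_mult Q (galg_mult Q (U [^]\<^bsub>RQ\<^esub> k) (V [^]\<^bsub>RQ\<^esub> (n-k))) V x))"
    by (simp add: gm_sum_left gm_scal_left gm_add_right)
  also have "\<dots> = (\<lambda>x. \<Sum>k\<le>n. of_nat (n choose k) *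
        (galg_mult Q (U [^]\<^bsub>RQ\<^esub> Suc k) (V [^]\<^bsub>RQ\<^esub> (n-k)) x
       + galg_mult Q (U [^]\<^bsub>RQ\<^esub> k) (V [^]\<^bsub>RQ\<^esub> (Suc n - k)) x))"
    by (intro ext sum.cong refl) (simp add: t1 t2)
  also have "\<dots> = (\<lambda>x. \<Sum>k\<le>Suc n. of_nat (Suc n choose k) *
        galg_mult Q (U [^]\<^bsub>RQ\<^esub> k) (V [^]\<^bsub>RQ\<^esub> (Suc n - k)) x)"
    by (rule ext) (rule pascal_sum[where A = "\<lambda>i j. galg_mult Q (U [^]\<^bsub>RQ\<^esub> i) (V [^]\<^bsub>RQ\<^esub> j) x" for x])
  finally show ?case .
qed

end


context
  fixes Q :: "('q, 'b) monoid_scheme" (structure)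
  assumes cg: "comm_group Q" and fin: "finite (carrier Q)"
begin

lemma gQ: "group Q"
  using cg by (simp add: comm_group_def)

lemma frob1:
  fixes U V :: "'q \<Rightarrow> 'k::field"
  assumes U: "U \<in> galg_carrier Q" and V: "V \<in> galg_carrier Q"
    and pr: "Factorial_Ring.prime CHAR('k)"
  shows "(\<lambda>x. U x + V x) [^]\<^bsub>(group_alg Q)\<^esub> CHAR('k)
     = (\<lambda>x. (U [^]\<^bsub>(group_alg Q)\<^esub> CHAR('k)) x + (V [^]\<^bsub>(group_alg Q)\<^esub> CHAR('k)) x)"
proof -
  interpret M: comm_monoid "group_alg Q :: ('q \<Rightarrow> 'k) ring" by (rule RQ_cm[OF cg fin])
  let ?p = "CHAR('k)"
  have p0: "?p \<noteq> 0" using pr by auto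
  have UC: "U \<in> carrier (group_alg Q)" "V \<in> carrier (group_alg Q)" using U V by (simp_all add: group_alg_simps)
  have "(\<lambda>x. U x + V x) [^]\<^bsub>(group_alg Q)\<^esub> ?p
     = (\<lambda>x. \<Sum>k\<le>?p. of_nat (?p choose k) * galg_mult Q (U [^]\<^bsub>(group_alg Q)\<^esub> k) (V [^]\<^bsub>(group_alg Q)\<^esub> (?p-k)) x)"
    by (rule binom_RQ[OF cg fin U V])
  also have "\<dots> = (\<lambda>x. \<Sum>k\<in>{0,?p}. of_nat (?p choose k) * galg_mult Q (U [^]\<^bsub>(group_alg Q)\<^esub> k) (V [^]\<^bsub>(group_alg Q)\<^esub> (?p-k)) x)"
  proof (rule ext, rule sum.mono_neutral_right)
    fix x
    show "\<forall>k\<in>{..?p} - {0, ?p}. of_nat (?p choose k) * galg_mult Q (U [^]\<^bsub>(group_alg Q)\<^esub> k) (V [^]\<^bsub>(group_alg Q)\<^esub> (?p-k)) x = 0"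
    proof
      fix k assume k: "k \<in> {..?p} - {0, ?p}"
      have "?p dvd (?p choose k)"
        by (rule dvd_choose_prime) (use k p0 pr in auto)
      then have "of_nat (?p choose k) = (0::'k)"
        using of_nat_eq_0_iff_char_dvd by blast
      then show "of_nat (?p choose k) * galg_mult Q (U [^]\<^bsub>(group_alg Q)\<^esub> k) (V [^]\<^bsub>(group_alg Q)\<^esub> (?p-k)) x = 0"
        by simp
    qed
  qed auto
  also have "\<dots> = (\<lambda>x. (U [^]\<^bsub>(group_alg Q)\<^esub> ?p) x + (V [^]\<^bsub>(group_alg Q)\<^esub> ?p) x)"
  proof -
    have a: "galg_mult Q (U [^]\<^bsub>(group_alg Q)\<^esub> ?p) (V [^]\<^bsub>(group_alg Q)\<^esub> (0::nat)) = U [^]\<^bsub>(group_alg Q)\<^esub> ?p"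
      using M.r_one[OF M.nat_pow_closed[OF UC(1)]] by (simp add: group_alg_simps)
    have b: "galg_mult Q (U [^]\<^bsub>(group_alg Q)\<^esub> (0::nat)) (V [^]\<^bsub>(group_alg Q)\<^esub> ?p) = V [^]\<^bsub>(group_alg Q)\<^esub> ?p"
      using M.l_one[OF M.nat_pow_closed[OF UC(2)]] by (simp add: group_alg_simps)
    show ?thesis using p0 a b by (simp add: add.commute)
  qed
  finally show ?thesis .
qed

lemma pow_galg_carrier: "F [^]\<^bsub>(group_alg Q)\<^esub> (n::nat) \<in> galg_carrier Q"
proof (cases n)
  case 0 then show ?thesis using galg_one_closed[OF gQ] by (simp add: group_alg_simps)
next
  case (Suc m) then show ?thesis by (simp add: group_alg_simps galg_mult_closed)
qed

lemma frob_t: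
  fixes U V :: "'q \<Rightarrow> 'k::field"
  assumes U: "U \<in> galg_carrier Q" and V: "V \<in> galg_carrier Q"
    and pr: "Factorial_Ring.prime CHAR('k)"
  shows "(\<lambda>x. U x + V x) [^]\<^bsub>(group_alg Q)\<^esub> (CHAR('k) ^ t)
     = (\<lambda>x. (U [^]\<^bsub>(group_alg Q)\<^esub> (CHAR('k) ^ t)) x + (V [^]\<^bsub>(group_alg Q)\<^esub> (CHAR('k) ^ t)) x)"
proof (induction t)
  case 0
  have UV: "(\<lambda>x. U x + V x) \<in> galg_carrier Q" using U V by (simp add: galg_carrier_def)
  show ?case by (simp add: group_alg_simps galg_one_mult[OF gQ fin] U V UV)
next
  case (Suc t)
  interpret M: comm_monoid "group_alg Q :: ('q \<Rightarrow> 'k) ring" by (rule RQ_cm[OF cg fin])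
  let ?p = "CHAR('k)"
  have pw: "W [^]\<^bsub>(group_alg Q)\<^esub> (?p ^ Suc t) = (W [^]\<^bsub>(group_alg Q)\<^esub> (?p ^ t)) [^]\<^bsub>(group_alg Q)\<^esub> ?p"
    if "W \<in> galg_carrier Q" for W :: "'q \<Rightarrow> 'k"
    using M.nat_pow_pow[of W "?p ^ t" ?p] that by (simp add: group_alg_simps mult.commute)
  have UV: "(\<lambda>x. U x + V x) \<in> galg_carrier Q" using U V by (simp add: galg_carrier_def)
  show ?case
    by (simp only: pw[OF UV] pw[OF U] pw[OF V] Suc.IH)
       (rule frob1[OF pow_galg_carrier pow_galg_carrier pr])
qed

lemma frob_sum:
  fixes F :: "'i \<Rightarrow> 'q \<Rightarrow> 'k::field"
  assumes S: "finite S" and F: "\<And>i. i \<in> S \<Longrightarrow> F i \<in> galg_carrier Q"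
    and pr: "Factorial_Ring.prime CHAR('k)"
  shows "(\<lambda>x. \<Sum>i\<in>S. F i x) [^]\<^bsub>(group_alg Q)\<^esub> (CHAR('k) ^ t)
     = (\<lambda>x. \<Sum>i\<in>S. (F i [^]\<^bsub>(group_alg Q)\<^esub> (CHAR('k) ^ t)) x)"
  using S F
proof (induction S rule: finite_induct)
  case empty
  have "CHAR('k) ^ t \<noteq> 0" using pr by (simp add: prime_gt_0_nat)
  then obtain m where m: "CHAR('k) ^ t = Suc m" using not0_implies_Suc by blast
  show ?case by (simp add: m group_alg_simps galg_mult_def fun_eq_iff)
next
  case (insert a S)
  have S: "(\<lambda>x. \<Sum>i\<in>S. F i x) \<in> galg_carrier Q"
    using insert.prems by (auto simp: galg_carrier_def)
  have "(\<lambda>x. \<Sum>i\<in>insert a S. F i x) = (\<lambda>x. F a x + (\<lambda>x. \<Sum>i\<in>S. F i x) x)"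
    using insert.hyps by simp
  then show ?case
    using frob_t[OF insert.prems[of a] S pr, of t] insert by simp
qed

lemma mono_mult:
  assumes E: "E \<in> carrier Q" and D: "D \<in> carrier Q"
  shows "galg_mult Q (\<lambda>x. if x = E then a else 0) (\<lambda>x. if x = D then b else 0)
       = (\<lambda>x. if x = E \<otimes> D then a * b else (0::'k::field))"
proof
  interpret group Q by (rule gQ)
  fix x
  show "galg_mult Q (\<lambda>x. if x = E then a else 0) (\<lambda>x. if x = D then b else 0) x
       = (if x = E \<otimes> D then a * b else 0)"
  proof (cases "x \<in> carrier Q")
    case True
    have "(\<Sum>y\<in>carrier Q. (if y = E then a else 0) * (if inv y \<otimes> x = D then b else 0))
        = (\<Sum>y\<in>carrier Q. if y = E then a * (if inv y \<otimes> x = D then b else 0) else 0)"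
      by (rule sum.cong) auto
    also have "\<dots> = a * (if inv E \<otimes> x = D then b else 0)" using E fin by (simp add: sum.delta)
    also have "\<dots> = (if x = E \<otimes> D then a * b else 0)"
      using inv_solve_left'[OF D E True] by auto
    finally show ?thesis using True by (simp add: galg_mult_def)
  next
    case False
    then have "x \<noteq> E \<otimes> D" using E D by auto
    then show ?thesis using False by (simp add: galg_mult_def)
  qed
qed

lemma mono_pow:
  assumes E: "E \<in> carrier Q"
  shows "(\<lambda>x. if x = E then c else 0) [^]\<^bsub>(group_alg Q)\<^esub> n
       = (\<lambda>x. if x = E [^]\<^bsub>Q\<^esub> n then c ^ n else (0::'k::field))"
proof (induction n)
  case 0 then show ?case by (simp add: group_alg_simps fun_eq_iff)
next
  case (Suc n)
  interpret group Q by (rule gQ)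
  show ?case using mono_mult[OF nat_pow_closed[OF E, of n] E, of "c ^ n" c]
    by (simp add: Suc.IH group_alg_simps mult.commute fun_eq_iff)
qed

lemma frob_formula:
  fixes F :: "'q \<Rightarrow> 'k::field"
  assumes F: "F \<in> galg_carrier Q" and pr: "Factorial_Ring.prime CHAR('k)"
  shows "F [^]\<^bsub>(group_alg Q)\<^esub> (CHAR('k) ^ t)
      = (\<lambda>D. (\<Sum>E\<in>{E\<in>carrier Q. E [^]\<^bsub>Q\<^esub> (CHAR('k) ^ t) = D}. F E) ^ (CHAR('k) ^ t))"
proof -
  let ?q = "CHAR('k) ^ t"
  have dec: "F = (\<lambda>x. \<Sum>E\<in>carrier Q. (\<lambda>x. if x = E then F E else 0) x)"
  proof
    fix x show "F x = (\<Sum>E\<in>carrier Q. (\<lambda>x. if x = E then F E else 0) x)"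
      using F fin by (auto simp: galg_carrier_def sum.delta')
  qed
  have mc: "(\<lambda>x. if x = E then F E else 0) \<in> galg_carrier Q" if "E \<in> carrier Q" for E
    using that by (auto simp: galg_carrier_def)
  have "F [^]\<^bsub>(group_alg Q)\<^esub> ?q = (\<lambda>x. \<Sum>E\<in>carrier Q. ((\<lambda>x. if x = E then F E else 0) [^]\<^bsub>(group_alg Q)\<^esub> ?q) x)"
    by (subst dec, rule frob_sum[OF fin mc pr])
  also have "\<dots> = (\<lambda>D. \<Sum>E\<in>carrier Q. if E [^]\<^bsub>Q\<^esub> ?q = D then F E ^ ?q else 0)"
    by (intro ext sum.cong refl) (auto simp: mono_pow)
  also have "\<dots> = (\<lambda>D. \<Sum>E\<in>{E\<in>carrier Q. E [^]\<^bsub>Q\<^esub> ?q = D}. F E ^ ?q)"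
    using fin by (simp add: sum.inter_filter)
  also have "\<dots> = (\<lambda>D. (\<Sum>E\<in>{E\<in>carrier Q. E [^]\<^bsub>Q\<^esub> ?q = D}. F E) ^ ?q)"
    by (rule ext) (rule freshmans_dream_sum'[OF pr refl, symmetric])
  finally show ?thesis .
qed

lemma frob_zero_iff:
  fixes F :: "'q \<Rightarrow> 'k::field"
  assumes F: "F \<in> galg_carrier Q" and pr: "Factorial_Ring.prime CHAR('k)"
  shows "F [^]\<^bsub>(group_alg Q)\<^esub> (CHAR('k) ^ t) = (\<lambda>x. 0)
     \<longleftrightarrow> (\<forall>D. (\<Sum>E\<in>{E\<in>carrier Q. E [^]\<^bsub>Q\<^esub> (CHAR('k) ^ t) = D}. F E) = 0)"
  using pr by (simp add: frob_formula[OF F pr] fun_eq_iff prime_gt_0_nat)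

end


lemma rel_aug_sumI:
  assumes S: "finite S"
    and AB: "\<And>i. i \<in> S \<Longrightarrow> A i \<in> aug_ideal G N \<and> B i \<in> galg_carrier G"
  shows "(\<lambda>w. \<Sum>i\<in>S. galg_mult G (A i) (B i) w) \<in> rel_aug_ideal G N"
proof -
  obtain e where e: "bij_betw e {0..<card S} S" using ex_bij_betw_nat_finite[OF S] by blast
  have eS: "i < card S \<Longrightarrow> e i \<in> S" for i using e by (auto simp: bij_betw_def)
  have "(\<lambda>w. \<Sum>i\<in>S. galg_mult G (A i) (B i) w) = (\<lambda>w. \<Sum>i<card S. galg_mult G (A (e i)) (B (e i)) w)"
    using sum.reindex_bij_betw[OF e, of "\<lambda>i. galg_mult G (A i) (B i) w" for w]
    by (simp add: atLeast0LessThan)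
  then show ?thesis
    unfolding rel_aug_ideal_def
    by (intro CollectI exI[of _ "card S"] exI[of _ "\<lambda>i. A (e i)"] exI[of _ "\<lambda>i. B (e i)"])
       (use AB eS in auto)
qed

context
  fixes G :: "('g, 'b) monoid_scheme" (structure)
  assumes gG: "group G" and finG: "finite (carrier G)"
begin

lemma rcosets_img: "rcosets N = (\<lambda>x. N #> x) ` carrier G"
  by (auto simp: RCOSETS_def)

lemma coset_fiber:
  assumes N: "subgroup N G" and C: "C \<in> rcosets N"
  shows "{x. x \<in> carrier G \<and> N #> x = C} = C"
proof -
  interpret group G by (rule gG)
  obtain g where g: "g \<in> carrier G" and Cg: "C = N #> g" using C by (auto simp: RCOSETS_def)
  have sub: "N #> g \<subseteq> carrier G" by (rule r_coset_subset_G[OF subgroup.subset[OF N] g])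
  have 1: "x \<in> C" if "x \<in> carrier G" "N #> x = C" for x
    using rcos_self[OF _ N] that by auto
  have 2: "x \<in> carrier G \<and> N #> x = C" if "x \<in> C" for x
    using sub Cg repr_independence[OF _ g N] that by auto
  show ?thesis using 1 2 by blast
qed

lemma coset_regroup:
  assumes N: "subgroup N G"
  shows "(\<Sum>x\<in>carrier G. h x) = (\<Sum>C\<in>rcosets N. \<Sum>x\<in>C. h x)"
proof -
  have fin: "finite (rcosets N)" using finG by (simp add: rcosets_img)
  have "(\<Sum>C\<in>rcosets N. \<Sum>x\<in>{x. x \<in> carrier G \<and> N #> x = C}. h x) = (\<Sum>x\<in>carrier G. h x)"
    by (rule sum.group[OF finG fin]) (auto simp: rcosets_img)
  moreover have "(\<Sum>C\<in>rcosets N. \<Sum>x\<in>{x. x \<in> carrier G \<and> N #> x = C}. h x) = (\<Sum>C\<in>rcosets N. \<Sum>x\<in>C. h x)"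
    by (rule sum.cong) (simp_all add: coset_fiber[OF N])
  ultimately show ?thesis by simp
qed

lemma coset_sum_mult_zero:
  assumes N: "subgroup N G" and a: "a \<in> aug_ideal G N" and g: "g \<in> carrier G"
  shows "(\<Sum>x\<in>N #> g. galg_mult G a b x) = 0"
proof -
  interpret group G by (rule gG)
  have NG: "N \<subseteq> carrier G" by (rule subgroup.subset[OF N])
  have sub: "N #> g \<subseteq> carrier G" by (rule r_coset_subset_G[OF NG g])
  have mem: "z \<in> N #> g \<longleftrightarrow> z \<otimes> inv g \<in> N" if "z \<in> carrier G" for z
    by (rule subgroup.rcos_module[OF N gG g that])
  have re: "(\<Sum>x\<in>N #> g. b (inv y \<otimes> x)) = (\<Sum>z\<in>N #> g. b z)" if y: "y \<in> N" for y
  proof (rule sum.reindex_bij_witness[of _ "\<lambda>z. y \<otimes> z" "\<lambda>x. inv y \<otimes> x"])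
    have yc: "y \<in> carrier G" using y NG by auto
    fix x assume x: "x \<in> N #> g"
    have xc: "x \<in> carrier G" using x sub by auto
    show "y \<otimes> (inv y \<otimes> x) = x" using yc xc by (simp add: m_assoc[symmetric])
    have "inv y \<otimes> x \<otimes> inv g = inv y \<otimes> (x \<otimes> inv g)" using yc xc g by (simp add: m_assoc)
    moreover have "inv y \<otimes> (x \<otimes> inv g) \<in> N"
      using mem[OF xc] x y subgroup.m_closed[OF N] subgroup.m_inv_closed[OF N] by auto
    ultimately show "inv y \<otimes> x \<in> N #> g" using mem yc xc by auto
    show "b (inv y \<otimes> x) = b (inv y \<otimes> x)" by simp
  next
    have yc: "y \<in> carrier G" using y NG by auto
    fix z assume z: "z \<in> N #> g"
    have zc: "z \<in> carrier G" using z sub by auto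
    show "inv y \<otimes> (y \<otimes> z) = z" using yc zc by (simp add: m_assoc[symmetric])
    have "y \<otimes> z \<otimes> inv g = y \<otimes> (z \<otimes> inv g)" using yc zc g by (simp add: m_assoc)
    moreover have "y \<otimes> (z \<otimes> inv g) \<in> N"
      using mem[OF zc] z y subgroup.m_closed[OF N] by auto
    ultimately show "y \<otimes> z \<in> N #> g" using mem yc zc by auto
  qed
  have a0: "\<And>y. y \<notin> N \<Longrightarrow> a y = 0" and asum: "(\<Sum>y\<in>N. a y) = 0"
    using a by (auto simp: aug_ideal_def)
  have asumG: "(\<Sum>y\<in>carrier G. a y) = 0"
    using sum.mono_neutral_right[OF finG NG, of a] a0 asum by auto
  have "(\<Sum>x\<in>N #> g. galg_mult G a b x) = (\<Sum>x\<in>N #> g. \<Sum>y\<in>carrier G. a y * b (inv y \<otimes> x))"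
    by (rule sum.cong) (use sub in \<open>auto simp: galg_mult_def\<close>)
  also have "\<dots> = (\<Sum>y\<in>carrier G. a y * (\<Sum>x\<in>N #> g. b (inv y \<otimes> x)))"
    by (subst sum.swap) (simp add: sum_distrib_left)
  also have "\<dots> = (\<Sum>y\<in>carrier G. a y * (\<Sum>z\<in>N #> g. b z))"
    by (intro sum.cong refl) (metis re a0 mult_zero_left)
  also have "\<dots> = 0" using asumG by (simp add: sum_distrib_right[symmetric])
  finally show ?thesis .
qed

end


context
  fixes G :: "('g, 'b) monoid_scheme" (structure)
  assumes gG: "group G" and finG: "finite (carrier G)"
begin

lemma rel_aug_sub:
  assumes N: "subgroup N G" and f: "f \<in> rel_aug_ideal G N"
  shows "f \<in> galg_carrier G \<and> (\<forall>g\<in>carrier G. (\<Sum>x\<in>N #> g. f x) = (0::'k::field))"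
proof -
  obtain n and a b :: "nat \<Rightarrow> 'g \<Rightarrow> 'k" where ab: "\<forall>i<n. a i \<in> aug_ideal G N \<and> b i \<in> galg_carrier G"
    and fe: "f = (\<lambda>x. \<Sum>i<n. galg_mult G (a i) (b i) x)"
    using f unfolding rel_aug_ideal_def mem_Collect_eq by (elim exE conjE) blast
  have "f \<in> galg_carrier G" unfolding fe by (simp add: galg_carrier_def galg_mult_def)
  moreover have "(\<Sum>x\<in>N #> g. f x) = 0" if g: "g \<in> carrier G" for g
  proof -
    have "(\<Sum>x\<in>N #> g. f x) = (\<Sum>i<n. \<Sum>x\<in>N #> g. galg_mult G (a i) (b i) x)"
      unfolding fe by (rule sum.swap)
    also have "\<dots> = 0"
      by (rule sum.neutral) (use ab coset_sum_mult_zero[OF gG finG N _ g] in auto)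
    finally show ?thesis .
  qed
  ultimately show ?thesis by blast
qed

lemma rel_aug_sup:
  assumes N: "subgroup N G" and f: "f \<in> galg_carrier G"
    and cs: "\<forall>g\<in>carrier G. (\<Sum>x\<in>N #> g. f x) = (0::'k::field)"
  shows "f \<in> rel_aug_ideal G N"
proof -
  interpret group G by (rule gG)
  have NG: "N \<subseteq> carrier G" by (rule subgroup.subset[OF N])
  have finN: "finite N" using finite_subset[OF NG finG] .
  define r where "r C = (SOME c. c \<in> C)" for C :: "'g set"
  define c where "c x = r (N #> x)" for x
  have cx: "c x \<in> N #> x" if "x \<in> carrier G" for x
    unfolding c_def r_def by (rule someI[of _ x]) (rule rcos_self[OF that N])
  have cc: "c x \<in> carrier G" if "x \<in> carrier G" for x
    using cx[OF that] r_coset_subset_G[OF NG that] by auto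
  have xcN: "x \<otimes> inv (c x) \<in> N" if x: "x \<in> carrier G" for x
  proof -
    have "c x \<otimes> inv x \<in> N" using subgroup.rcos_module_imp[OF N gG x cx[OF x]] .
    then have "inv (c x \<otimes> inv x) \<in> N" by (rule subgroup.m_inv_closed[OF N])
    then show ?thesis using x cc[OF x] by (simp add: inv_mult_group)
  qed
  define A where "A x = (\<lambda>z. f x * ((if z = x \<otimes> inv (c x) then 1 else 0) - (if z = \<one> then 1 else 0)))" for x
  define B where "B x = (\<lambda>z. if z = c x then (1::'k) else 0)" for x
  have Aaug: "A x \<in> aug_ideal G N" if x: "x \<in> carrier G" for x
  proof -
    have "(\<Sum>z\<in>N. A x z) = f x * ((\<Sum>z\<in>N. if z = x \<otimes> inv (c x) then 1 else 0) - (\<Sum>z\<in>N. if z = \<one> then 1 else 0))"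
      unfolding A_def by (simp add: sum_distrib_left[symmetric] sum_subtractf)
    also have "\<dots> = 0" using finN xcN[OF x] subgroup.one_closed[OF N] by (simp add: sum.delta)
    finally show ?thesis
      using xcN[OF x] subgroup.one_closed[OF N] by (auto simp: aug_ideal_def A_def)
  qed
  have Bc: "B x \<in> galg_carrier G" if x: "x \<in> carrier G" for x
    using cc[OF x] by (auto simp: galg_carrier_def B_def)
  have AB: "galg_mult G (A x) (B x) = (\<lambda>w. f x * ((if w = x then 1 else 0) - (if w = c x then 1 else 0)))"
    if x: "x \<in> carrier G" for x
  proof
    fix w
    show "galg_mult G (A x) (B x) w = f x * ((if w = x then 1 else 0) - (if w = c x then 1 else 0))"
    proof (cases "w \<in> carrier G")
      case w: True
      have ccx: "c x \<in> carrier G" by (rule cc[OF x])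
      have eq: "(inv y \<otimes> w = c x) \<longleftrightarrow> (y = w \<otimes> inv (c x))" if y: "y \<in> carrier G" for y
        using y w ccx by (metis inv_solve_left' inv_solve_right)
      have "galg_mult G (A x) (B x) w = (\<Sum>y\<in>carrier G. if y = w \<otimes> inv (c x) then A x y else 0)"
        using w by (auto simp: galg_mult_def B_def eq intro!: sum.cong)
      also have "\<dots> = A x (w \<otimes> inv (c x))" using finG w ccx by (simp add: sum.delta)
      also have "\<dots> = f x * ((if w = x then 1 else 0) - (if w = c x then 1 else 0))"
      proof -
        have "(w \<otimes> inv (c x) = x \<otimes> inv (c x)) \<longleftrightarrow> w = x"
          using w x ccx by (metis r_cancel inv_closed)
        moreover have "(w \<otimes> inv (c x) = \<one>) \<longleftrightarrow> w = c x"
          using w ccx by (metis inv_equality inv_inv l_inv r_inv inv_closed)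
        ultimately show ?thesis by (simp add: A_def)
      qed
      finally show ?thesis .
    next
      case False
      then have "w \<noteq> x" "w \<noteq> c x" using x cc[OF x] by auto
      then show ?thesis using False by (simp add: galg_mult_def)
    qed
  qed
  have mem: "(\<lambda>w. \<Sum>x\<in>carrier G. galg_mult G (A x) (B x) w) \<in> rel_aug_ideal G N"
    by (rule rel_aug_sumI[OF finG]) (use Aaug Bc in auto)
  have "(\<lambda>w. \<Sum>x\<in>carrier G. galg_mult G (A x) (B x) w) = f"
  proof
    fix w
    have s1: "(\<Sum>x\<in>carrier G. f x * (if w = x then 1 else 0)) = f w"
      using f finG by (auto simp: galg_carrier_def if_distrib sum.delta cong: if_cong)
    have s2: "(\<Sum>x\<in>carrier G. f x * (if w = c x then 1 else 0)) = 0"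
    proof -
      have "(\<Sum>x\<in>carrier G. f x * (if w = c x then 1 else 0))
          = (\<Sum>C\<in>rcosets N. \<Sum>x\<in>C. f x * (if w = c x then 1 else 0))"
        by (rule coset_regroup[OF gG finG N])
      also have "\<dots> = (\<Sum>C\<in>rcosets N. (if w = r C then 1 else 0) * (\<Sum>x\<in>C. f x))"
      proof (rule sum.cong[OF refl])
        fix C assume C: "C \<in> rcosets N"
        have "x \<in> C \<Longrightarrow> c x = r C" for x
          using coset_fiber[OF gG finG N C] by (auto simp: c_def)
        then show "(\<Sum>x\<in>C. f x * (if w = c x then 1 else 0)) = (if w = r C then 1 else 0) * (\<Sum>x\<in>C. f x)"
          by (simp add: sum_distrib_left mult.commute)
      qed
      also have "\<dots> = 0"
        by (rule sum.neutral) (use cs in \<open>auto simp: RCOSETS_def\<close>)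
      finally show ?thesis .
    qed
    have "(\<Sum>x\<in>carrier G. galg_mult G (A x) (B x) w)
        = (\<Sum>x\<in>carrier G. f x * (if w = x then 1 else 0) - f x * (if w = c x then 1 else 0))"
      by (rule sum.cong) (simp_all add: AB right_diff_distrib)
    also have "\<dots> = f w" using s1 s2 by (simp add: sum_subtractf)
    finally show "(\<Sum>x\<in>carrier G. galg_mult G (A x) (B x) w) = f w" .
  qed
  then show ?thesis using mem by simp
qed

lemma rel_aug_char:
  assumes N: "subgroup N G"
  shows "rel_aug_ideal G N = {f. f \<in> galg_carrier G \<and> (\<forall>g\<in>carrier G. (\<Sum>x\<in>N #> g. f x) = (0::'k::field))}"
  using rel_aug_sub[OF N] rel_aug_sup[OF N] by blast

end


definition cpi :: "('g, 'b) monoid_scheme \<Rightarrow> 'g set \<Rightarrow> ('g \<Rightarrow> 'k::field) \<Rightarrow> ('g set \<Rightarrow> 'k)" where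
  "cpi G N f = (\<lambda>C. if C \<in> carrier (G Mod N) then (\<Sum>x\<in>C. f x) else 0)"

lemma cpi_carrier: "cpi G N f \<in> galg_carrier (G Mod N)"
  by (simp add: cpi_def galg_carrier_def)

context
  fixes G :: "('g, 'b) monoid_scheme" (structure)
  assumes gG: "group G" and finG: "finite (carrier G)"
begin

lemma lcos_image:
  assumes N: "normal N G" and y: "y \<in> carrier G" and g: "g \<in> carrier G"
  shows "(\<lambda>x. inv y \<otimes> x) ` (N #> g) = N #> (inv y \<otimes> g)"
proof -
  interpret normal N G by (rule N)
  have "(\<lambda>x. inv y \<otimes> x) ` (N #> g) = inv y <# (N #> g)"
    by (auto simp: l_coset_def)
  also have "\<dots> = inv y <# (g <# N)" using coset_eq g by simp
  also have "\<dots> = (inv y \<otimes> g) <# N" using lcos_m_assoc[OF subset _ g] y by simp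
  also have "\<dots> = N #> (inv y \<otimes> g)" using coset_eq y g by simp
  finally show ?thesis .
qed

lemma cpi_mult:
  assumes N: "normal N G"
  shows "cpi G N (galg_mult G f h) = galg_mult (G Mod N) (cpi G N f) (cpi G N h)"
proof
  interpret normal N G by (rule N)
  have NS: "subgroup N G" by (rule subgroup_axioms)
  fix C
  show "cpi G N (galg_mult G f h) C = galg_mult (G Mod N) (cpi G N f) (cpi G N h) C"
  proof (cases "C \<in> carrier (G Mod N)")
    case False then show ?thesis by (simp add: cpi_def galg_mult_def)
  next
    case True
    then obtain g where g: "g \<in> carrier G" and Cg: "C = N #> g"
      by (auto simp: FactGroup_def RCOSETS_def)
    have sub: "C \<subseteq> carrier G" using Cg r_coset_subset_G[OF subset g] by simp
    have inner: "(\<Sum>x\<in>C. h (inv y \<otimes> x)) = (\<Sum>z\<in>N #> (inv y \<otimes> g). h z)" if y: "y \<in> carrier G" for y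
    proof -
      have inj: "inj_on (\<lambda>x. inv y \<otimes> x) C"
        using sub y by (auto simp: inj_on_def) (metis inv_closed l_cancel subsetD)
      have "(\<Sum>z\<in>N #> (inv y \<otimes> g). h z) = (\<Sum>z\<in>(\<lambda>x. inv y \<otimes> x) ` C. h z)"
        using lcos_image[OF N y g] Cg by simp
      also have "\<dots> = (\<Sum>x\<in>C. h (inv y \<otimes> x))" by (rule sum.reindex_cong[OF inj refl refl])
      finally show ?thesis by simp
    qed
    have qm: "inv\<^bsub>G Mod N\<^esub> (N #> y) \<otimes>\<^bsub>G Mod N\<^esub> C = N #> (inv y \<otimes> g)" if y: "y \<in> carrier G" for y
    proof -
      have "N #> y \<in> carrier (G Mod N)" using y by (auto simp: FactGroup_def RCOSETS_def)
      then have "inv\<^bsub>G Mod N\<^esub> (N #> y) = N #> inv y" using inv_FactGroup rcos_inv[OF y] by simp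
      then show ?thesis using Cg rcos_sum[OF inv_closed[OF y] g] by simp
    qed
    have inQ: "N #> x \<in> carrier (G Mod N)" if "x \<in> carrier G" for x
      using that by (auto simp: FactGroup_def RCOSETS_def)
    have "cpi G N (galg_mult G f h) C = (\<Sum>x\<in>C. \<Sum>y\<in>carrier G. f y * h (inv y \<otimes> x))"
      using True sub by (auto simp: cpi_def galg_mult_def intro!: sum.cong)
    also have "\<dots> = (\<Sum>y\<in>carrier G. f y * (\<Sum>x\<in>C. h (inv y \<otimes> x)))"
      by (subst sum.swap) (simp add: sum_distrib_left)
    also have "\<dots> = (\<Sum>y\<in>carrier G. f y * cpi G N h (inv\<^bsub>G Mod N\<^esub> (N #> y) \<otimes>\<^bsub>G Mod N\<^esub> C))"
      by (intro sum.cong refl) (simp add: inner qm[simplified] cpi_def inQ inv_closed g)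
    also have "\<dots> = (\<Sum>D\<in>rcosets N. \<Sum>y\<in>D. f y * cpi G N h (inv\<^bsub>G Mod N\<^esub> (N #> y) \<otimes>\<^bsub>G Mod N\<^esub> C))"
      by (rule coset_regroup[OF gG finG NS])
    also have "\<dots> = (\<Sum>D\<in>rcosets N. (\<Sum>y\<in>D. f y) * cpi G N h (inv\<^bsub>G Mod N\<^esub> D \<otimes>\<^bsub>G Mod N\<^esub> C))"
    proof (rule sum.cong[OF refl])
      fix D assume D: "D \<in> rcosets N"
      have "y \<in> D \<Longrightarrow> N #> y = D" for y using coset_fiber[OF gG finG NS D] by auto
      then show "(\<Sum>y\<in>D. f y * cpi G N h (inv\<^bsub>G Mod N\<^esub> (N #> y) \<otimes>\<^bsub>G Mod N\<^esub> C))
          = (\<Sum>y\<in>D. f y) * cpi G N h (inv\<^bsub>G Mod N\<^esub> D \<otimes>\<^bsub>G Mod N\<^esub> C)"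
        by (simp add: sum_distrib_right)
    qed
    also have "\<dots> = galg_mult (G Mod N) (cpi G N f) (cpi G N h) C"
      using True by (simp add: galg_mult_def cpi_def FactGroup_def cong: if_cong)
    finally show ?thesis .
  qed
qed

lemma cpi_one:
  assumes N: "normal N G"
  shows "cpi G N (\<lambda>x. if x = \<one> then 1 else 0) = (\<lambda>C. if C = \<one>\<^bsub>G Mod N\<^esub> then (1::'k::field) else 0)"
proof
  interpret normal N G by (rule N)
  fix C
  show "cpi G N (\<lambda>x. if x = \<one> then 1 else 0) C = (if C = \<one>\<^bsub>G Mod N\<^esub> then (1::'k) else 0)"
  proof (cases "C \<in> carrier (G Mod N)")
    case False
    have "N \<in> carrier (G Mod N)"
      using subgroup_in_rcosets[OF is_group] by (simp add: FactGroup_def)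
    then show ?thesis using False by (auto simp: cpi_def)
  next
    case True
    then obtain g where g: "g \<in> carrier G" and Cg: "C = N #> g"
      by (auto simp: FactGroup_def RCOSETS_def)
    have fin: "finite C" using Cg r_coset_subset_G[OF subset g] finite_subset finG by metis
    have "\<one> \<in> C \<longleftrightarrow> C = N"
    proof
      assume "\<one> \<in> C"
      then have "N #> g = N #> \<one>" using Cg repr_independence[OF _ g subgroup_axioms] by simp
      then show "C = N" using Cg by (simp add: coset_mult_one subset)
    next
      assume "C = N" then show "\<one> \<in> C" by simp
    qed
    then show ?thesis using True fin by (simp add: cpi_def sum.delta)
  qed
qed

lemma cpi_pow:
  assumes N: "normal N G"
  shows "cpi G N (f [^]\<^bsub>group_alg G\<^esub> (n::nat)) = (cpi G N f) [^]\<^bsub>group_alg (G Mod N)\<^esub> n"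
  by (induction n) (simp_all add: group_alg_simps cpi_one[OF N] cpi_mult[OF N])

lemma cpi_zero_iff:
  "cpi G N f = (\<lambda>C. 0) \<longleftrightarrow> (\<forall>g\<in>carrier G. (\<Sum>x\<in>N #> g. f x) = 0)"
  by (auto simp: cpi_def fun_eq_iff FactGroup_def RCOSETS_def)

end


context
  fixes G :: "('g, 'b) monoid_scheme" (structure)
    and N :: "'g set"
  assumes gG: "group G" and finG: "finite (carrier G)"
    and N: "subgroup N G" and DN: "derived G (carrier G) \<subseteq> N"
begin

lemma comm_in_N:
  assumes a: "a \<in> carrier G" and b: "b \<in> carrier G"
  shows "a \<otimes> b \<otimes> inv a \<otimes> inv b \<in> N"
proof -
  interpret group G by (rule gG)
  have "a \<otimes> b \<otimes> inv a \<otimes> inv b \<in> derived_set G (carrier G)" using a b by blast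
  then have "a \<otimes> b \<otimes> inv a \<otimes> inv b \<in> derived G (carrier G)"
    unfolding derived_def by (rule generate.incl)
  then show ?thesis using DN by blast
qed

lemma N_normal: "normal N G"
proof -
  interpret group G by (rule gG)
  show ?thesis
  proof (rule normal_invI[OF N])
    fix x h assume x: "x \<in> carrier G" and h: "h \<in> N"
    have hc: "h \<in> carrier G" using h subgroup.subset[OF N] by auto
    have "x \<otimes> h \<otimes> inv x = (x \<otimes> h \<otimes> inv x \<otimes> inv h) \<otimes> h"
      using x hc by (simp add: m_assoc)
    moreover have "(x \<otimes> h \<otimes> inv x \<otimes> inv h) \<otimes> h \<in> N"
      using comm_in_N[OF x hc] h subgroup.m_closed[OF N] by blast
    ultimately show "x \<otimes> h \<otimes> inv x \<in> N" by simp
  qed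
qed

lemma rcos_eq_iff:
  assumes a: "a \<in> carrier G" and b: "b \<in> carrier G"
  shows "N #> a = N #> b \<longleftrightarrow> a \<otimes> inv b \<in> N"
proof -
  interpret group G by (rule gG)
  show ?thesis
  proof
    assume "N #> a = N #> b"
    then have "a \<in> N #> b" using rcos_self[OF a N] by simp
    then show "a \<otimes> inv b \<in> N" using subgroup.rcos_module_imp[OF N gG b] by blast
  next
    assume "a \<otimes> inv b \<in> N"
    then have "a \<in> N #> b" using subgroup.rcos_module_rev[OF N gG b a] by blast
    then show "N #> a = N #> b" using repr_independence[OF _ b N] by simp
  qed
qed

lemma Q_comm: "comm_group (G Mod N)"
proof -
  interpret normal N G by (rule N_normal)
  interpret Q: group "G Mod N" by (rule factorgroup_is_group)
  show ?thesis
  proof (rule Q.group_comm_groupI)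
    fix X1 Y1 assume X1: "X1 \<in> carrier (G Mod N)" and Y1: "Y1 \<in> carrier (G Mod N)"
    obtain a where a: "a \<in> carrier G" and Xa: "X1 = N #> a" using X1 by (auto simp: FactGroup_def RCOSETS_def)
    obtain b where b: "b \<in> carrier G" and Yb: "Y1 = N #> b" using Y1 by (auto simp: FactGroup_def RCOSETS_def)
    have "a \<otimes> b \<otimes> inv (b \<otimes> a) = a \<otimes> b \<otimes> inv a \<otimes> inv b"
      using a b by (simp add: inv_mult_group m_assoc)
    then have "N #> (a \<otimes> b) = N #> (b \<otimes> a)"
      using rcos_eq_iff[of "a \<otimes> b" "b \<otimes> a"] comm_in_N[OF a b] a b by simp
    then show "X1 \<otimes>\<^bsub>G Mod N\<^esub> Y1 = Y1 \<otimes>\<^bsub>G Mod N\<^esub> X1"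
      using Xa Yb rcos_sum a b by simp
  qed
qed

lemma Q_fin: "finite (carrier (G Mod N))"
  using finG by (simp add: carrier_FactGroup)

definition S0 :: "nat \<Rightarrow> 'g set" where "S0 q = {g \<in> carrier G. g [^] q \<in> N}"

lemma pow_in_N_iff:
  assumes x: "x \<in> carrier G"
  shows "x [^] (q::nat) \<in> N \<longleftrightarrow> (N #> x) [^]\<^bsub>G Mod N\<^esub> q = \<one>\<^bsub>G Mod N\<^esub>"
proof -
  interpret normal N G by (rule N_normal)
  have "(N #> x) [^]\<^bsub>G Mod N\<^esub> q = N #> (x [^] q)" using FactGroup_pow[OF x] by (simp add: r_coset_def)
  moreover have "N #> (x [^] q) = N \<longleftrightarrow> x [^] q \<in> N"
    using rcos_eq_iff[of "x [^] q" \<one>] x by (simp add: coset_mult_one subset)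
  ultimately show ?thesis by simp
qed

lemma S0_subgroup: "subgroup (S0 q) G"
proof -
  interpret normal N G by (rule N_normal)
  interpret Q: comm_group "G Mod N" by (rule Q_comm)
  have hom: "(\<lambda>a. N #> a) \<in> hom G (G Mod N)" by (rule r_coset_hom_Mod)
  have inQ: "N #> x \<in> carrier (G Mod N)" if "x \<in> carrier G" for x
    using that by (auto simp: FactGroup_def RCOSETS_def)
  show ?thesis
  proof
    show "S0 q \<subseteq> carrier G" by (auto simp: S0_def)
  next
    show "\<one> \<in> S0 q" by (simp add: S0_def)
  next
    fix x y assume x: "x \<in> S0 q" and y: "y \<in> S0 q"
    have xc: "x \<in> carrier G" and yc: "y \<in> carrier G" using x y by (auto simp: S0_def)
    have "(N #> (x \<otimes> y)) [^]\<^bsub>G Mod N\<^esub> q = ((N #> x) \<otimes>\<^bsub>G Mod N\<^esub> (N #> y)) [^]\<^bsub>G Mod N\<^esub> q"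
      using rcos_sum[OF xc yc] by simp
    also have "\<dots> = (N #> x) [^]\<^bsub>G Mod N\<^esub> q \<otimes>\<^bsub>G Mod N\<^esub> (N #> y) [^]\<^bsub>G Mod N\<^esub> q"
      by (rule Q.nat_pow_distrib[OF inQ[OF xc] inQ[OF yc]])
    also have "\<dots> = \<one>\<^bsub>G Mod N\<^esub>" using x y pow_in_N_iff xc yc by (simp add: S0_def subgroup_mult_id[OF N])
    finally show "x \<otimes> y \<in> S0 q" using pow_in_N_iff[of "x \<otimes> y"] xc yc by (simp add: S0_def)
  next
    fix x assume x: "x \<in> S0 q"
    have xc: "x \<in> carrier G" using x by (auto simp: S0_def)
    have "(N #> inv x) [^]\<^bsub>G Mod N\<^esub> q = (inv\<^bsub>G Mod N\<^esub> (N #> x)) [^]\<^bsub>G Mod N\<^esub> q"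
      using inv_FactGroup[OF inQ[OF xc]] rcos_inv[OF xc] by simp
    also have "\<dots> = inv\<^bsub>G Mod N\<^esub> ((N #> x) [^]\<^bsub>G Mod N\<^esub> q)" by (rule Q.nat_pow_inv[OF inQ[OF xc]])
    also have "\<dots> = \<one>\<^bsub>G Mod N\<^esub>" using x pow_in_N_iff xc using Q.inv_one by (simp add: S0_def)
    finally show "inv x \<in> S0 q" using pow_in_N_iff[of "inv x"] xc by (simp add: S0_def)
  qed
qed

lemma Omega_eq: "Omega_rel G p t N = S0 (p ^ t)"
proof -
  interpret group G by (rule gG)
  have "generate G (S0 (p ^ t)) = S0 (p ^ t)"
  proof
    show "generate G (S0 (p ^ t)) \<subseteq> S0 (p ^ t)" by (rule generate_subgroup_incl[OF subset_refl S0_subgroup])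
    show "S0 (p ^ t) \<subseteq> generate G (S0 (p ^ t))" by (auto intro: generate.incl)
  qed
  then show ?thesis by (simp add: Omega_rel_def S0_def)
qed

lemma S0_coset_iff:
  assumes x: "x \<in> carrier G" and g: "g \<in> carrier G"
  shows "x \<in> S0 q #> g \<longleftrightarrow> (N #> x) [^]\<^bsub>G Mod N\<^esub> q = (N #> g) [^]\<^bsub>G Mod N\<^esub> q"
proof -
  interpret normal N G by (rule N_normal)
  interpret Q: comm_group "G Mod N" by (rule Q_comm)
  have inQ: "N #> z \<in> carrier (G Mod N)" if "z \<in> carrier G" for z
    using that by (auto simp: FactGroup_def RCOSETS_def)
  let ?a = "N #> x" and ?b = "N #> g"
  have a: "?a \<in> carrier (G Mod N)" and b: "?b \<in> carrier (G Mod N)" using inQ x g by auto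
  have "x \<in> S0 q #> g \<longleftrightarrow> x \<otimes> inv g \<in> S0 q"
    by (rule subgroup.rcos_module[OF S0_subgroup gG g x])
  also have "\<dots> \<longleftrightarrow> (N #> (x \<otimes> inv g)) [^]\<^bsub>G Mod N\<^esub> q = \<one>\<^bsub>G Mod N\<^esub>"
    using pow_in_N_iff[of "x \<otimes> inv g" q] x g by (simp add: S0_def)
  also have "N #> (x \<otimes> inv g) = ?a \<otimes>\<^bsub>G Mod N\<^esub> inv\<^bsub>G Mod N\<^esub> ?b"
    using rcos_sum[OF x inv_closed[OF g]] inv_FactGroup[OF b] rcos_inv[OF g] by simp
  also have "(?a \<otimes>\<^bsub>G Mod N\<^esub> inv\<^bsub>G Mod N\<^esub> ?b) [^]\<^bsub>G Mod N\<^esub> q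
      = ?a [^]\<^bsub>G Mod N\<^esub> q \<otimes>\<^bsub>G Mod N\<^esub> inv\<^bsub>G Mod N\<^esub> (?b [^]\<^bsub>G Mod N\<^esub> q)"
    using Q.nat_pow_distrib[OF a Q.inv_closed[OF b]] Q.nat_pow_inv[OF b] by simp
  also have "\<dots> = \<one>\<^bsub>G Mod N\<^esub> \<longleftrightarrow> ?a [^]\<^bsub>G Mod N\<^esub> q = ?b [^]\<^bsub>G Mod N\<^esub> q"
    using a b by (metis Q.inv_closed Q.inv_equality Q.inv_inv Q.nat_pow_closed Q.r_inv)
  finally show ?thesis .
qed

end


lemma pow_galg_carrier_g:
  assumes "group G"
  shows "F [^]\<^bsub>group_alg G\<^esub> (n::nat) \<in> galg_carrier G"
proof (cases n)
  case 0 then show ?thesis using galg_one_closed[OF assms] by (simp add: group_alg_simps)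
next
  case (Suc m) then show ?thesis by (simp add: group_alg_simps galg_mult_closed)
qed

lemma hom_pow:
  assumes h: "\<phi> \<in> ring_hom (group_alg G) (group_alg H)" and G: "group G"
    and x: "x \<in> galg_carrier G"
  shows "\<phi> (x [^]\<^bsub>group_alg G\<^esub> (n::nat)) = (\<phi> x) [^]\<^bsub>group_alg H\<^esub> n"
proof (induction n)
  case 0 then show ?case using h by (simp add: ring_hom_def)
next
  case (Suc n)
  have m: "\<forall>x y. x \<in> galg_carrier G \<and> y \<in> galg_carrier G \<longrightarrow> \<phi> (galg_mult G x y) = galg_mult H (\<phi> x) (\<phi> y)"
    using h by (simp add: ring_hom_def group_alg_simps)
  have "\<phi> (x [^]\<^bsub>group_alg G\<^esub> n \<otimes>\<^bsub>group_alg G\<^esub> x) = \<phi> (x [^]\<^bsub>group_alg G\<^esub> n) \<otimes>\<^bsub>group_alg H\<^esub> \<phi> x"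
  proof -
    have "\<phi> (galg_mult G (x [^]\<^bsub>group_alg G\<^esub> n) x) = galg_mult H (\<phi> (x [^]\<^bsub>group_alg G\<^esub> n)) (\<phi> x)"
      using m pow_galg_carrier_g[OF G, of x n] x by blast
    then show ?thesis by (simp add: group_alg_simps)
  qed
  then show ?case using Suc.IH by simp
qed

context
  fixes G :: "('g, 'b) monoid_scheme" (structure)
    and N :: "'g set"
  assumes gG: "group G" and finG: "finite (carrier G)"
    and N: "subgroup N G" and DN: "derived G (carrier G) \<subseteq> N"
begin

lemma regroup_D:
  fixes f :: "'g \<Rightarrow> 'k::field"
  shows "(\<Sum>E\<in>{E\<in>carrier (G Mod N). E [^]\<^bsub>G Mod N\<^esub> (q::nat) = D}. cpi G N f E)
       = (\<Sum>x\<in>{x\<in>carrier G. (N #> x) [^]\<^bsub>G Mod N\<^esub> q = D}. f x)"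
proof -
  have finQ: "finite (rcosets N)" using finG by (simp add: rcosets_img[OF gG finG])
  have "(\<Sum>x\<in>{x\<in>carrier G. (N #> x) [^]\<^bsub>G Mod N\<^esub> q = D}. f x)
      = (\<Sum>x\<in>carrier G. if (N #> x) [^]\<^bsub>G Mod N\<^esub> q = D then f x else 0)"
    using finG by (simp add: sum.inter_filter)
  also have "\<dots> = (\<Sum>C\<in>rcosets N. \<Sum>x\<in>C. if (N #> x) [^]\<^bsub>G Mod N\<^esub> q = D then f x else 0)"
    by (rule coset_regroup[OF gG finG N])
  also have "\<dots> = (\<Sum>C\<in>rcosets N. if C [^]\<^bsub>G Mod N\<^esub> q = D then (\<Sum>x\<in>C. f x) else 0)"
  proof (rule sum.cong[OF refl])
    fix C assume C: "C \<in> rcosets N"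
    have "x \<in> C \<Longrightarrow> N #> x = C" for x using coset_fiber[OF gG finG N C] by auto
    then show "(\<Sum>x\<in>C. if (N #> x) [^]\<^bsub>G Mod N\<^esub> q = D then f x else 0)
        = (if C [^]\<^bsub>G Mod N\<^esub> q = D then (\<Sum>x\<in>C. f x) else 0)"
      by (auto intro: sum.neutral)
  qed
  also have "\<dots> = (\<Sum>C\<in>{C\<in>rcosets N. C [^]\<^bsub>G Mod N\<^esub> q = D}. \<Sum>x\<in>C. f x)"
    using finQ by (simp add: sum.inter_filter)
  also have "\<dots> = (\<Sum>E\<in>{E\<in>carrier (G Mod N). E [^]\<^bsub>G Mod N\<^esub> q = D}. cpi G N f E)"
    by (rule sum.cong) (auto simp: cpi_def FactGroup_def)
  finally show ?thesis by simp
qed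

lemma S0_coset_set:
  assumes g: "g \<in> carrier G"
  shows "S0 G N q #> g = {x\<in>carrier G. (N #> x) [^]\<^bsub>G Mod N\<^esub> q = (N #> g) [^]\<^bsub>G Mod N\<^esub> q}"
proof -
  interpret group G by (rule gG)
  have sub: "S0 G N q #> g \<subseteq> carrier G"
    using r_coset_subset_G[OF subgroup.subset[OF S0_subgroup[OF gG finG N DN]] g] .
  show ?thesis using sub S0_coset_iff[OF gG finG N DN _ g] by blast
qed

lemma key:
  fixes f :: "'g \<Rightarrow> 'k::field"
  assumes f: "f \<in> galg_carrier G" and pr: "Factorial_Ring.prime CHAR('k)"
  shows "f [^]\<^bsub>group_alg G\<^esub> (CHAR('k) ^ t) \<in> rel_aug_ideal G N
     \<longleftrightarrow> f \<in> rel_aug_ideal G (S0 G N (CHAR('k) ^ t))"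
proof -
  let ?q = "CHAR('k) ^ t"
  let ?Q = "G Mod N"
  have fq: "f [^]\<^bsub>group_alg G\<^esub> ?q \<in> galg_carrier G" by (rule pow_galg_carrier_g[OF gG])
  have "f [^]\<^bsub>group_alg G\<^esub> ?q \<in> rel_aug_ideal G N
      \<longleftrightarrow> (\<forall>g\<in>carrier G. (\<Sum>x\<in>N #> g. (f [^]\<^bsub>group_alg G\<^esub> ?q) x) = 0)"
    using fq by (simp add: rel_aug_char[OF gG finG N])
  also have "\<dots> \<longleftrightarrow> cpi G N (f [^]\<^bsub>group_alg G\<^esub> ?q) = (\<lambda>C. 0)"
    by (simp add: cpi_zero_iff[OF gG finG])
  also have "\<dots> \<longleftrightarrow> (cpi G N f) [^]\<^bsub>group_alg ?Q\<^esub> ?q = (\<lambda>C. 0)"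
    by (simp add: cpi_pow[OF gG finG N_normal[OF gG finG N DN]])
  also have "\<dots> \<longleftrightarrow> (\<forall>D. (\<Sum>E\<in>{E\<in>carrier ?Q. E [^]\<^bsub>?Q\<^esub> ?q = D}. cpi G N f E) = 0)"
    by (rule frob_zero_iff[OF Q_comm[OF gG finG N DN] Q_fin[OF gG finG N DN] cpi_carrier pr])
  also have "\<dots> \<longleftrightarrow> (\<forall>D. (\<Sum>x\<in>{x\<in>carrier G. (N #> x) [^]\<^bsub>?Q\<^esub> ?q = D}. f x) = 0)"
    by (simp add: regroup_D)
  also have "\<dots> \<longleftrightarrow> (\<forall>g\<in>carrier G. (\<Sum>x\<in>S0 G N ?q #> g. f x) = 0)"
  proof
    assume A: "\<forall>D. (\<Sum>x\<in>{x\<in>carrier G. (N #> x) [^]\<^bsub>?Q\<^esub> ?q = D}. f x) = 0"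
    show "\<forall>g\<in>carrier G. (\<Sum>x\<in>S0 G N ?q #> g. f x) = 0"
      using A by (simp add: S0_coset_set)
  next
    assume B: "\<forall>g\<in>carrier G. (\<Sum>x\<in>S0 G N ?q #> g. f x) = 0"
    show "\<forall>D. (\<Sum>x\<in>{x\<in>carrier G. (N #> x) [^]\<^bsub>?Q\<^esub> ?q = D}. f x) = 0"
    proof
      fix D
      show "(\<Sum>x\<in>{x\<in>carrier G. (N #> x) [^]\<^bsub>?Q\<^esub> ?q = D}. f x) = 0"
      proof (cases "{x\<in>carrier G. (N #> x) [^]\<^bsub>?Q\<^esub> ?q = D} = {}")
        case True then show ?thesis by (metis sum.empty)
      next
        case False
        then obtain x0 where x0: "x0 \<in> carrier G" "(N #> x0) [^]\<^bsub>?Q\<^esub> ?q = D" by blast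
        then show ?thesis using B S0_coset_set[OF x0(1), of ?q] by auto
      qed
    qed
  qed
  also have "\<dots> \<longleftrightarrow> f \<in> rel_aug_ideal G (S0 G N ?q)"
    using f by (simp add: rel_aug_char[OF gG finG S0_subgroup[OF gG finG N DN]])
  finally show ?thesis .
qed

end

lemma key_Omega:
  fixes G :: "('g, 'b) monoid_scheme" and f :: "'g \<Rightarrow> 'k::field"
  assumes gG: "group G" and finG: "finite (carrier G)"
    and N: "subgroup N G" and DN: "derived G (carrier G) \<subseteq> N"
    and f: "f \<in> galg_carrier G" and pr: "Factorial_Ring.prime CHAR('k)"
  shows "f [^]\<^bsub>group_alg G\<^esub> (CHAR('k) ^ t) \<in> rel_aug_ideal G N
     \<longleftrightarrow> f \<in> rel_aug_ideal G (Omega_rel G CHAR('k) t N)"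
  using key[OF gG finG N DN f pr] Omega_eq[OF gG finG N DN] by simp

theorem lemma2p6:
  fixes p :: nat
    and G :: "'g monoid" and H :: "'h monoid"
    and NG :: "'g set" and NH :: "'h set"
    and \<phi> :: "('g \<Rightarrow> 'k::field) \<Rightarrow> ('h \<Rightarrow> 'k)"
  assumes "Factorial_Ring.prime p"
    and "p_group p G" and "p_group p H"
    and "subgroup NG G" and "derived G (carrier G) \<subseteq> NG"
    and "subgroup NH H" and "derived H (carrier H) \<subseteq> NH"
    and "CHAR('k) = p"
    and "\<phi> \<in> ring_iso (group_alg G) (group_alg H)"
    and "\<phi> ` rel_aug_ideal G NG = rel_aug_ideal H NH"
    and "t > 0"
  shows "\<phi> ` rel_aug_ideal G (Omega_rel G p t NG) = rel_aug_ideal H (Omega_rel H p t NH)"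
proof -
  note pr = assms(1)[folded assms(8)]
  have gG: "group G" and finG: "finite (carrier G)" using assms(2) by (auto simp: p_group_def)
  have gH: "group H" and finH: "finite (carrier H)" using assms(3) by (auto simp: p_group_def)
  have hom: "\<phi> \<in> ring_hom (group_alg G) (group_alg H)"
    and bij: "bij_betw \<phi> (galg_carrier G) (galg_carrier H)"
    using assms(9) by (auto simp: ring_iso_def group_alg_simps)
  let ?q = "CHAR('k) ^ t"
  have KG: "f [^]\<^bsub>group_alg G\<^esub> ?q \<in> rel_aug_ideal G NG \<longleftrightarrow> f \<in> rel_aug_ideal G (Omega_rel G p t NG)"
    if "f \<in> galg_carrier G" for f :: "'g \<Rightarrow> 'k"
    using key_Omega[OF gG finG assms(4,5) that pr] assms(8) by simp
  have KH: "f [^]\<^bsub>group_alg H\<^esub> ?q \<in> rel_aug_ideal H NH \<longleftrightarrow> f \<in> rel_aug_ideal H (Omega_rel H p t NH)"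
    if "f \<in> galg_carrier H" for f :: "'h \<Rightarrow> 'k"
    using key_Omega[OF gH finH assms(6,7) that pr] assms(8) by simp
  have subG: "(rel_aug_ideal G M :: ('g \<Rightarrow> 'k) set) \<subseteq> galg_carrier G" if "subgroup M G" for M
    using rel_aug_sub[OF gG finG that] by blast
  have subH: "(rel_aug_ideal H M :: ('h \<Rightarrow> 'k) set) \<subseteq> galg_carrier H" if "subgroup M H" for M
    using rel_aug_sub[OF gH finH that] by blast
  have OG: "subgroup (Omega_rel G p t NG) G"
    using S0_subgroup[OF gG finG assms(4,5)] Omega_eq[OF gG finG assms(4,5)] by simp
  have OH: "subgroup (Omega_rel H p t NH) H"
    using S0_subgroup[OF gH finH assms(6,7)] Omega_eq[OF gH finH assms(6,7)] by simp
  have phiC: "\<phi> f \<in> galg_carrier H" if "f \<in> galg_carrier G" for f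
    using bij that by (auto simp: bij_betw_def)
  have inj: "inj_on \<phi> (galg_carrier G)" using bij by (auto simp: bij_betw_def)
  show ?thesis
  proof
    show "\<phi> ` rel_aug_ideal G (Omega_rel G p t NG) \<subseteq> rel_aug_ideal H (Omega_rel H p t NH)"
    proof
      fix y assume "y \<in> \<phi> ` rel_aug_ideal G (Omega_rel G p t NG)"
      then obtain f where f: "f \<in> rel_aug_ideal G (Omega_rel G p t NG)" and y: "y = \<phi> f" by blast
      have fc: "f \<in> galg_carrier G" using f subG[OF OG] by blast
      have "f [^]\<^bsub>group_alg G\<^esub> ?q \<in> rel_aug_ideal G NG" using KG[OF fc] f by simp
      then have "\<phi> (f [^]\<^bsub>group_alg G\<^esub> ?q) \<in> rel_aug_ideal H NH" using assms(10) by blast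
      then have "y [^]\<^bsub>group_alg H\<^esub> ?q \<in> rel_aug_ideal H NH" using hom_pow[OF hom gG fc] y by simp
      then show "y \<in> rel_aug_ideal H (Omega_rel H p t NH)" using KH phiC[OF fc] y by simp
    qed
  next
    show "rel_aug_ideal H (Omega_rel H p t NH) \<subseteq> \<phi> ` rel_aug_ideal G (Omega_rel G p t NG)"
    proof
      fix y :: "'h \<Rightarrow> 'k" assume y: "y \<in> rel_aug_ideal H (Omega_rel H p t NH)"
      have yc: "y \<in> galg_carrier H" by (rule subsetD[OF subH[OF OH] y])
      then obtain f where fc: "f \<in> galg_carrier G" and yf: "y = \<phi> f"
        using bij by (auto simp: bij_betw_def)
      have "y [^]\<^bsub>group_alg H\<^esub> ?q \<in> rel_aug_ideal H NH" using KH[OF yc] y by simp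
      then have "\<phi> (f [^]\<^bsub>group_alg G\<^esub> ?q) \<in> \<phi> ` rel_aug_ideal G NG"
        using hom_pow[OF hom gG fc] yf assms(10) by simp
      then obtain f' where f': "f' \<in> rel_aug_ideal G NG" and e: "\<phi> (f [^]\<^bsub>group_alg G\<^esub> ?q) = \<phi> f'"
        by blast
      have "f [^]\<^bsub>group_alg G\<^esub> ?q = f'"
        using inj_onD[OF inj e pow_galg_carrier_g[OF gG]] f' subG[OF assms(4)] by blast
      then have "f \<in> rel_aug_ideal G (Omega_rel G p t NG)" using KG[OF fc] f' by simp
      then show "y \<in> \<phi> ` rel_aug_ideal G (Omega_rel G p t NG)" using yf by blast
    qed
  qed
qed


end
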